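(* Assume $v\equiv0$, $\beta>0$, $\zeta_l>0$ and $\zeta_r>0$. Then $$\mathcal{J}_\beta(N)=\frac{2(\alpha_{in}^l\alpha_{out}^r-\alpha_{out}^l\alpha_{in}^r)}{\zeta_l+\zeta_r+\zeta_l\zeta_r\big(\zeta_l+\zeta_r+\beta(N-1)\big)}.$$
   Context: Fix an integer $N\ge2$. Let $e_1,\dots,e_N$ be the standard basis of $\mathbb{C}^N$ (inner product antilinear in the first slot), $p_n=|e_n\rangle\langle e_n|$, and $h$ the Hermitian matrix $(h\psi)(n)=-\psi(n+1)-\psi(n-1)+v(n)\psi(n)$, $n=1,\dots,N$, $\psi(0)=\psi(N+1)=0$. Let $\alpha_{in}^l,\alpha_{out}^l,\alpha_{in}^r,\alpha_{out}^r,\beta\ge0$, $\zeta_l=\alpha_{in}^l+\alpha_{out}^l$, $\zeta_r=\alpha_{in}^r+\alpha_{out}^r$. Define $l(a)=-i[h,a]-\{\zeta_lp_1+\zeta_rp_N,a\}+\beta\left(\sum_{n=1}^Np_nap_n-a\right)$ on $M_N(\mathbb{C})$, $T_t=e^{tl}$, $R_\infty=\int_0^\infty T_s(2\alpha_{in}^lp_1+2\alpha_{in}^rp_N)\,ds$, and the stationary current $\mathcal{J}_\beta(N)=2\,\mathrm{Im}\langle e_2,R_\infty e_1\rangle$. *)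

theory Defs
  imports "HOL-Analysis.Analysis"
begin

text \<open>N x N complex matrices are represented as functions nat \<Rightarrow> nat \<Rightarrow> complex,
  indexed by 1..N (entries outside this range are irrelevant / zero).
  Entry (i,j) of a matrix a equals the inner product of e_i with a e_j.\<close>

type_synonym cmat = "nat \<Rightarrow> nat \<Rightarrow> complex"

definition mmul :: "nat \<Rightarrow> cmat \<Rightarrow> cmat \<Rightarrow> cmat" where
  "mmul N A B = (\<lambda>i j. \<Sum>k\<in>{1..N}. A i k * B k j)"

definition proj :: "nat \<Rightarrow> cmat" where
  "proj n = (\<lambda>i j. if i = n \<and> j = n then 1 else 0)"

definition hmat :: "nat \<Rightarrow> (nat \<Rightarrow> real) \<Rightarrow> cmat" where
  "hmat N v = (\<lambda>i j. if i \<in> {1..N} \<and> j \<in> {1..N} then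
      (if i = j then complex_of_real (v i) else 0) - (if j = i + 1 \<or> i = j + 1 then 1 else 0)
    else 0)"

definition lind :: "nat \<Rightarrow> (nat \<Rightarrow> real) \<Rightarrow> real \<Rightarrow> real \<Rightarrow> real \<Rightarrow> cmat \<Rightarrow> cmat" where
  "lind N v zl zr beta a = (\<lambda>i j. if i \<in> {1..N} \<and> j \<in> {1..N} then
      - \<i> * (mmul N (hmat N v) a i j - mmul N a (hmat N v) i j)
      - (mmul N (\<lambda>r s. of_real zl * proj 1 r s + of_real zr * proj N r s) a i j
         + mmul N a (\<lambda>r s. of_real zl * proj 1 r s + of_real zr * proj N r s) i j)
      + of_real beta * ((\<Sum>n\<in>{1..N}. mmul N (mmul N (proj n) a) (proj n) i j) - a i j)
    else 0)"

definition semigroup :: "nat \<Rightarrow> (nat \<Rightarrow> real) \<Rightarrow> real \<Rightarrow> real \<Rightarrow> real \<Rightarrow> real \<Rightarrow> cmat \<Rightarrow> cmat" where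
  "semigroup N v zl zr beta t a = (\<lambda>i j.
      \<Sum>k. complex_of_real (t ^ k / fact k) * ((lind N v zl zr beta ^^ k) a i j))"

definition Rinf :: "nat \<Rightarrow> (nat \<Rightarrow> real) \<Rightarrow> real \<Rightarrow> real \<Rightarrow> real \<Rightarrow> real \<Rightarrow> real \<Rightarrow> cmat" where
  "Rinf N v ainl aoutl ainr aoutr beta = (\<lambda>i j.
      integral {0..} (\<lambda>s. semigroup N v (ainl + aoutl) (ainr + aoutr) beta s
        (\<lambda>r c. of_real (2 * ainl) * proj 1 r c + of_real (2 * ainr) * proj N r c) i j))"

definition current :: "nat \<Rightarrow> (nat \<Rightarrow> real) \<Rightarrow> real \<Rightarrow> real \<Rightarrow> real \<Rightarrow> real \<Rightarrow> real \<Rightarrow> real" where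
  "current N v ainl aoutl ainr aoutr beta = 2 * Im (Rinf N v ainl aoutl ainr aoutr beta 2 1)"

end

theory Submission
  imports Defs
begin

lemma sum_if_eq_cases: "finite S \<Longrightarrow> (\<Sum>k\<in>S. (if P \<and> k = c then x k else 0)) = (if P \<and> c \<in> S then x c else 0)"
  by (cases P) auto

lemma mmul_Z_left:
  assumes "N \<ge> 2"
  shows "mmul N (\<lambda>r s. of_real zl * proj 1 r s + of_real zr * proj N r s) a i j
    = (of_real zl * (if i = 1 then 1 else 0) + of_real zr * (if i = N then 1 else 0)) * a i j"
proof -
  have "mmul N (\<lambda>r s. of_real zl * proj 1 r s + of_real zr * proj N r s) a i j
     = (\<Sum>k\<in>{1..N}. (if i = 1 \<and> k = 1 then of_real zl * a k j else 0))
      + (\<Sum>k\<in>{1..N}. (if i = N \<and> k = N then of_real zr * a k j else 0))"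
    unfolding mmul_def proj_def sum.distrib[symmetric] by (intro sum.cong) (use assms in auto)
  also have "\<dots> = (if i = 1 then of_real zl * a 1 j else 0) + (if i = N then of_real zr * a N j else 0)"
    by (simp only: sum_if_eq_cases finite_atLeastAtMost) (use assms in auto)
  finally show ?thesis using assms by (auto simp: ring_distribs mult.commute)
qed

lemma mmul_Z_right:
  assumes "N \<ge> 2"
  shows "mmul N a (\<lambda>r s. of_real zl * proj 1 r s + of_real zr * proj N r s) i j
    = (of_real zl * (if j = 1 then 1 else 0) + of_real zr * (if j = N then 1 else 0)) * a i j"
proof -
  have "mmul N a (\<lambda>r s. of_real zl * proj 1 r s + of_real zr * proj N r s) i j
     = (\<Sum>k\<in>{1..N}. (if j = 1 \<and> k = 1 then of_real zl * a i k else 0))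
      + (\<Sum>k\<in>{1..N}. (if j = N \<and> k = N then of_real zr * a i k else 0))"
    unfolding mmul_def proj_def sum.distrib[symmetric] by (intro sum.cong) (use assms in auto)
  also have "\<dots> = (if j = 1 then of_real zl * a i 1 else 0) + (if j = N then of_real zr * a i N else 0)"
    by (simp only: sum_if_eq_cases finite_atLeastAtMost) (use assms in auto)
  finally show ?thesis using assms by (auto simp: ring_distribs mult.commute)
qed

lemma mmul_proj_left: "mmul N (proj n) a i k = (if i = n \<and> n \<in> {1..N} then a n k else 0)"
proof -
  have "mmul N (proj n) a i k = (\<Sum>k'\<in>{1..N}. (if i = n \<and> k' = n then a k' k else 0))"
    unfolding mmul_def proj_def by (rule sum.cong) auto
  then show ?thesis by (simp only: sum_if_eq_cases finite_atLeastAtMost)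
qed

lemma mmul_proj_right: "mmul N a (proj n) i k = (if k = n \<and> n \<in> {1..N} then a i n else 0)"
proof -
  have "mmul N a (proj n) i k = (\<Sum>k'\<in>{1..N}. (if k = n \<and> k' = n then a i k' else 0))"
    unfolding mmul_def proj_def by (rule sum.cong) auto
  then show ?thesis by (simp only: sum_if_eq_cases finite_atLeastAtMost)
qed

lemma sum_proj:
  assumes "i \<in> {1..N}" "j \<in> {1..N}"
  shows "(\<Sum>n\<in>{1..N}. mmul N (mmul N (proj n) a) (proj n) i j) = (if i = j then a i i else 0)"
proof -
  have "(\<Sum>n\<in>{1..N}. mmul N (mmul N (proj n) a) (proj n) i j)
     = (\<Sum>n\<in>{1..N}. (if j = n then (if i = n then a n n else 0) else 0))"
    unfolding mmul_proj_right mmul_proj_left by (intro sum.cong) auto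
  also have "\<dots> = (if i = j then a i i else 0)"
    using assms by (simp add: sum.delta)
  finally show ?thesis .
qed

definition wt :: "nat \<Rightarrow> real \<Rightarrow> real \<Rightarrow> nat \<Rightarrow> complex" where
  "wt N zl zr i = of_real zl * (if i = 1 then 1 else 0) + of_real zr * (if i = N then 1 else 0)"

lemma lind_simp:
  assumes "N \<ge> 2"
  shows "lind N v zl zr beta a i j = (if i \<in> {1..N} \<and> j \<in> {1..N} then
     - \<i> * (mmul N (hmat N v) a i j - mmul N a (hmat N v) i j)
     - (wt N zl zr i + wt N zl zr j) * a i j + of_real beta * ((if i = j then a i i else 0) - a i j) else 0)"
proof (cases "i \<in> {1..N} \<and> j \<in> {1..N}")
  case True
  then show ?thesis
  proof -
    have "lind N v zl zr beta a i j = - \<i> * (mmul N (hmat N v) a i j - mmul N a (hmat N v) i j)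
      - (mmul N (\<lambda>r s. of_real zl * proj 1 r s + of_real zr * proj N r s) a i j
         + mmul N a (\<lambda>r s. of_real zl * proj 1 r s + of_real zr * proj N r s) i j)
      + of_real beta * ((\<Sum>n\<in>{1..N}. mmul N (mmul N (proj n) a) (proj n) i j) - a i j)"
      unfolding lind_def by (rule if_P[OF True])
    also have "\<dots> = - \<i> * (mmul N (hmat N v) a i j - mmul N a (hmat N v) i j)
     - (wt N zl zr i + wt N zl zr j) * a i j + of_real beta * ((if i = j then a i i else 0) - a i j)"
      using True assms by (simp only: mmul_Z_left mmul_Z_right sum_proj wt_def) (simp add: algebra_simps)
    finally show ?thesis using True by simp
  qed
next
  case False
  then show ?thesis unfolding lind_def by (simp only: if_not_P[OF False] if_False)
qed

lemma lind_sums: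
  assumes N: "N \<ge> 2" and s: "\<And>p q. p \<in> {1..N} \<Longrightarrow> q \<in> {1..N} \<Longrightarrow> (\<lambda>k. f k p q) sums A p q"
  shows "(\<lambda>k. lind N v zl zr beta (f k) i j) sums lind N v zl zr beta A i j"
proof (cases "i \<in> {1..N} \<and> j \<in> {1..N}")
  case True
  then show ?thesis
    unfolding lind_simp[OF N] mmul_def using True
    by (auto intro!: sums_minus sums_diff sums_add sums_mult sums_mult2 sums_sum s)
next
  case False
  then show ?thesis unfolding lind_simp[OF N] by auto
qed

lemma lind_scale:
  assumes N: "N \<ge> 2"
  shows "lind N v zl zr beta (\<lambda>p q. c * a p q) i j = c * lind N v zl zr beta a i j"
  unfolding lind_simp[OF N] mmul_def by (simp add: sum_distrib_left algebra_simps)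

lemma lind_neg:
  assumes N: "N \<ge> 2"
  shows "lind N v zl zr beta (\<lambda>p q. - a p q) i j = - lind N v zl zr beta a i j"
  using lind_scale[OF N, of v zl zr beta "-1" a i j] by simp

definition Sfun :: "nat \<Rightarrow> cmat \<Rightarrow> real" where
  "Sfun N a = (\<Sum>p\<in>{1..N}. \<Sum>q\<in>{1..N}. cmod (a p q))"

lemma Sfun_ge: "p \<in> {1..N} \<Longrightarrow> q \<in> {1..N} \<Longrightarrow> cmod (a p q) \<le> Sfun N a"
proof -
  assume p: "p \<in> {1..N}" and q: "q \<in> {1..N}"
  have "cmod (a p q) \<le> (\<Sum>q\<in>{1..N}. cmod (a p q))"
    by (rule member_le_sum[OF q]) auto
  also have "\<dots> \<le> Sfun N a" unfolding Sfun_def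
    by (rule member_le_sum[OF p, where f="\<lambda>p. \<Sum>q\<in>{1..N}. cmod (a p q)"]) (auto intro: sum_nonneg)
  finally show ?thesis .
qed

lemma Sfun_nonneg: "Sfun N a \<ge> 0"
  unfolding Sfun_def by (auto intro!: sum_nonneg)

lemma hmat0_bound: "cmod (hmat N (\<lambda>_. 0) i k) \<le> 1"
  unfolding hmat_def by auto

lemma mmul_h_left_bound:
  assumes "j \<in> {1..N}"
  shows "cmod (mmul N (hmat N (\<lambda>_. 0)) a i j) \<le> Sfun N a"
proof -
  have "cmod (mmul N (hmat N (\<lambda>_. 0)) a i j) \<le> (\<Sum>k\<in>{1..N}. cmod (hmat N (\<lambda>_. 0) i k * a k j))"
    unfolding mmul_def by (rule norm_sum)
  also have "\<dots> \<le> (\<Sum>k\<in>{1..N}. cmod (a k j))"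
    by (intro sum_mono) (auto simp: norm_mult intro!: mult_left_le_one_le hmat0_bound)
  also have "\<dots> \<le> (\<Sum>k\<in>{1..N}. \<Sum>q\<in>{1..N}. cmod (a k q))"
    by (intro sum_mono member_le_sum[OF assms]) auto
  finally show ?thesis unfolding Sfun_def .
qed

lemma mmul_h_right_bound:
  assumes "i \<in> {1..N}"
  shows "cmod (mmul N a (hmat N (\<lambda>_. 0)) i j) \<le> Sfun N a"
proof -
  have "cmod (mmul N a (hmat N (\<lambda>_. 0)) i j) \<le> (\<Sum>k\<in>{1..N}. cmod (a i k * hmat N (\<lambda>_. 0) k j))"
    unfolding mmul_def by (rule norm_sum)
  also have "\<dots> \<le> (\<Sum>k\<in>{1..N}. cmod (a i k))"
    by (intro sum_mono) (auto simp: norm_mult intro!: mult_right_le_one_le hmat0_bound)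
  also have "\<dots> \<le> Sfun N a"
    unfolding Sfun_def by (rule member_le_sum[OF assms, where f="\<lambda>p. \<Sum>q\<in>{1..N}. cmod (a p q)"]) (auto intro: sum_nonneg)
  finally show ?thesis .
qed

lemma lind_bound:
  assumes N: "N \<ge> 2" and zl: "zl \<ge> 0" and zr: "zr \<ge> 0" and b: "beta \<ge> 0"
  shows "cmod (lind N (\<lambda>_. 0) zl zr beta a i j) \<le> (2 + 2 * (zl + zr) + 2 * beta) * Sfun N a"
proof (cases "i \<in> {1..N} \<and> j \<in> {1..N}")
  case True
  then have i: "i \<in> {1..N}" and j: "j \<in> {1..N}" by auto
  have w: "cmod (wt N zl zr k) \<le> zl + zr" for k
    unfolding wt_def using zl zr by (auto intro!: order.trans[OF norm_triangle_ineq])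
  have aij: "cmod (a i j) \<le> Sfun N a" using Sfun_ge[OF i j] .
  have aii: "cmod (if i = j then a i i else 0) \<le> Sfun N a" using Sfun_ge[OF i i] Sfun_nonneg by auto
  have h1: "cmod (mmul N (hmat N (\<lambda>_. 0)) a i j) \<le> Sfun N a" by (rule mmul_h_left_bound[OF j])
  have h2: "cmod (mmul N a (hmat N (\<lambda>_. 0)) i j) \<le> Sfun N a" by (rule mmul_h_right_bound[OF i])
  have A: "cmod (- \<i> * (mmul N (hmat N (\<lambda>_. 0)) a i j - mmul N a (hmat N (\<lambda>_. 0)) i j)) \<le> 2 * Sfun N a"
    using norm_triangle_ineq4[of "mmul N (hmat N (\<lambda>_. 0)) a i j" "mmul N a (hmat N (\<lambda>_. 0)) i j"] h1 h2
    by (simp add: norm_mult)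
  have B: "cmod ((wt N zl zr i + wt N zl zr j) * a i j) \<le> (2 * (zl + zr)) * Sfun N a"
  proof -
    have "cmod (wt N zl zr i + wt N zl zr j) \<le> 2 * (zl + zr)"
      using norm_triangle_ineq[of "wt N zl zr i" "wt N zl zr j"] w[of i] w[of j] by (smt (verit))
    then show ?thesis unfolding norm_mult
      by (intro mult_mono aij) (use zl zr in auto)
  qed
  have C: "cmod (of_real beta * ((if i = j then a i i else 0) - a i j)) \<le> (2 * beta) * Sfun N a"
  proof -
    have "cmod ((if i = j then a i i else 0) - a i j) \<le> 2 * Sfun N a"
      using norm_triangle_ineq4[of "(if i = j then a i i else 0)" "a i j"] aij aii by linarith
    then have "beta * cmod ((if i = j then a i i else 0) - a i j) \<le> beta * (2 * Sfun N a)"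
      by (rule mult_left_mono[OF _ b])
    then show ?thesis
      by (simp only: norm_mult norm_of_real abs_of_nonneg[OF b] mult.assoc mult.left_commute[of 2])
  qed
  show ?thesis unfolding lind_simp[OF N] using True
    using norm_triangle_ineq[of "- \<i> * (mmul N (hmat N (\<lambda>_. 0)) a i j - mmul N a (hmat N (\<lambda>_. 0)) i j)
     - (wt N zl zr i + wt N zl zr j) * a i j" "of_real beta * ((if i = j then a i i else 0) - a i j)"]
    norm_triangle_ineq4[of "- \<i> * (mmul N (hmat N (\<lambda>_. 0)) a i j - mmul N a (hmat N (\<lambda>_. 0)) i j)"
     "(wt N zl zr i + wt N zl zr j) * a i j"] A B C
    by (simp add: algebra_simps)
next
  case False
  then show ?thesis unfolding lind_simp[OF N] if_not_P[OF False]
    using Sfun_nonneg[of N a] zl zr b by simp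
qed

lemma Sfun_lind_bound:
  assumes N: "N \<ge> 2" and zl: "zl \<ge> 0" and zr: "zr \<ge> 0" and b: "beta \<ge> 0"
  shows "Sfun N (lind N (\<lambda>_. 0) zl zr beta a) \<le> (real N * real N * (2 + 2 * (zl + zr) + 2 * beta)) * Sfun N a"
proof -
  have "Sfun N (lind N (\<lambda>_. 0) zl zr beta a)
     = (\<Sum>p\<in>{1..N}. \<Sum>q\<in>{1..N}. cmod (lind N (\<lambda>_. 0) zl zr beta a p q))"
    by (simp add: Sfun_def)
  also have "\<dots> \<le> (\<Sum>p\<in>{1..N}. \<Sum>q\<in>{1..N}. (2 + 2 * (zl + zr) + 2 * beta) * Sfun N a)"
    by (intro sum_mono lind_bound assms)
  also have "\<dots> = (real N * real N * (2 + 2 * (zl + zr) + 2 * beta)) * Sfun N a"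
    by simp
  finally show ?thesis .
qed

lemma Sfun_pow_bound:
  assumes N: "N \<ge> 2" and zl: "zl \<ge> 0" and zr: "zr \<ge> 0" and b: "beta \<ge> 0"
  shows "Sfun N ((lind N (\<lambda>_. 0) zl zr beta ^^ k) a) \<le> (real N * real N * (2 + 2 * (zl + zr) + 2 * beta)) ^ k * Sfun N a"
proof (induction k)
  case 0
  then show ?case by simp
next
  case (Suc k)
  define K where "K = real N * real N * (2 + 2 * (zl + zr) + 2 * beta)"
  have K: "K \<ge> 0" unfolding K_def using zl zr b by auto
  have "Sfun N ((lind N (\<lambda>_. 0) zl zr beta ^^ Suc k) a) \<le> K * Sfun N ((lind N (\<lambda>_. 0) zl zr beta ^^ k) a)"
    unfolding K_def by (simp only: funpow.simps comp_apply) (rule Sfun_lind_bound[OF assms])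
  also have "\<dots> \<le> K * (K ^ k * Sfun N a)"
    using Suc.IH K unfolding K_def[symmetric] by (rule mult_left_mono)
  finally show ?case unfolding K_def by (simp add: mult.assoc)
qed

locale setting =
  fixes N :: nat and zl zr beta :: real
  assumes N2: "N \<ge> 2" and zl0: "zl \<ge> 0" and zr0: "zr \<ge> 0" and beta0: "beta \<ge> 0"
begin

abbreviation "L \<equiv> lind N (\<lambda>_. 0) zl zr beta"
abbreviation "T \<equiv> semigroup N (\<lambda>_. 0) zl zr beta"
definition "K = real N * real N * (2 + 2 * (zl + zr) + 2 * beta)"

lemma K_nonneg: "K \<ge> 0"
  unfolding K_def using zl0 zr0 beta0 by auto

lemma coef_bound:
  assumes "i \<in> {1..N}" "j \<in> {1..N}"
  shows "cmod ((L ^^ k) a i j) \<le> K ^ k * Sfun N a"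
  using Sfun_ge[OF assms, of "(L ^^ k) a"] Sfun_pow_bound[OF N2 zl0 zr0 beta0, of k a]
  unfolding K_def by linarith

definition Fs :: "cmat \<Rightarrow> nat \<Rightarrow> nat \<Rightarrow> complex \<Rightarrow> complex" where
  "Fs a i j z = (\<Sum>k. ((L ^^ k) a i j / fact k) * z ^ k)"

lemma Fs_summable:
  assumes "i \<in> {1..N}" "j \<in> {1..N}"
  shows "summable (\<lambda>k. ((L ^^ k) a i j / fact k) * z ^ k)"
proof (rule summable_comparison_test')
  show "summable (\<lambda>k. Sfun N a * (inverse (fact k) * (K * cmod z) ^ k))"
    by (intro summable_mult summable_exp)
  fix k :: nat
  have "cmod (((L ^^ k) a i j / fact k) * z ^ k) = cmod ((L ^^ k) a i j) * (inverse (fact k) * cmod z ^ k)"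
    by (simp add: norm_mult norm_divide norm_power field_simps)
  also have "\<dots> \<le> (K ^ k * Sfun N a) * (inverse (fact k) * cmod z ^ k)"
    by (intro mult_right_mono coef_bound assms) auto
  also have "\<dots> = Sfun N a * (inverse (fact k) * (K * cmod z) ^ k)"
    by (simp add: power_mult_distrib)
  finally show "cmod (((L ^^ k) a i j / fact k) * z ^ k) \<le> Sfun N a * (inverse (fact k) * (K * cmod z) ^ k)" .
qed

lemma T_Fs: "T t a i j = Fs a i j (of_real t)"
  unfolding semigroup_def Fs_def
  by (intro suminf_cong) (simp add: field_simps)

lemma Fs_deriv:
  assumes "i \<in> {1..N}" "j \<in> {1..N}"
  shows "(Fs a i j has_field_derivative Fs (L a) i j z) (at z)"
proof -
  have "((\<lambda>z. \<Sum>k. ((L ^^ k) a i j / fact k) * z ^ k) has_field_derivative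
     (\<Sum>k. diffs (\<lambda>k. (L ^^ k) a i j / fact k) k * z ^ k)) (at z)"
    by (rule termdiffs_strong_converges_everywhere) (rule Fs_summable[OF assms])
  moreover have "diffs (\<lambda>k. (L ^^ k) a i j / fact k) k = (L ^^ k) (L a) i j / fact k" for k
    unfolding diffs_def fact_Suc of_nat_mult funpow_Suc_right comp_apply
    using of_nat_neq_0[of k, where 'a=complex] by (simp add: field_simps del: of_nat_Suc)
  ultimately show ?thesis unfolding Fs_def[abs_def] by simp
qed

lemma T_deriv:
  assumes "i \<in> {1..N}" "j \<in> {1..N}"
  shows "((\<lambda>t. T t a i j) has_vector_derivative T t (L a) i j) (at t within S)"
  unfolding T_Fs by (rule has_vector_derivative_real_field) (rule Fs_deriv[OF assms])

lemma T_sums: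
  assumes "i \<in> {1..N}" "j \<in> {1..N}"
  shows "(\<lambda>k. complex_of_real (t ^ k / fact k) * (L ^^ k) a i j) sums T t a i j"
proof -
  have e: "(\<lambda>k. complex_of_real (t ^ k / fact k) * (L ^^ k) a i j) = (\<lambda>k. ((L ^^ k) a i j / fact k) * (of_real t) ^ k)"
    by (rule ext) (simp add: field_simps)
  show ?thesis unfolding e T_Fs Fs_def using Fs_summable[OF assms] by (rule summable_sums)
qed

lemma T_commute:
  assumes "i \<in> {1..N}" "j \<in> {1..N}"
  shows "T t (L a) i j = L (T t a) i j"
proof -
  have "(\<lambda>k. L (\<lambda>p q. complex_of_real (t ^ k / fact k) * (L ^^ k) a p q) i j) sums L (T t a) i j"
    by (rule lind_sums[OF N2]) (rule T_sums)
  moreover have "L (\<lambda>p q. complex_of_real (t ^ k / fact k) * (L ^^ k) a p q) i j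
      = complex_of_real (t ^ k / fact k) * (L ^^ k) (L a) i j" for k
    by (subst lind_scale[OF N2]) (simp add: funpow_swap1)
  ultimately have "(\<lambda>k. complex_of_real (t ^ k / fact k) * (L ^^ k) (L a) i j) sums L (T t a) i j"
    by simp
  with T_sums[OF assms, of t "L a"] show ?thesis by (rule sums_unique2)
qed

lemma T_zero: "T 0 a i j = a i j"
proof -
  have "(\<lambda>k. complex_of_real (0 ^ k / fact k) * (L ^^ k) a i j) = (\<lambda>k. if k = 0 then a i j else 0)"
    by (auto simp: fun_eq_iff)
  then show ?thesis unfolding semigroup_def using sums_single[of 0 "\<lambda>_. a i j"]
    by (simp add: sums_iff)
qed

lemma pow_neg: "(L ^^ k) (\<lambda>p q. - b p q) = (\<lambda>p q. - (L ^^ k) b p q)"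
proof (induction k)
  case (Suc k)
  show ?case by (simp add: Suc lind_neg[OF N2] fun_eq_iff)
qed simp

lemma T_neg:
  assumes "i \<in> {1..N}" "j \<in> {1..N}"
  shows "T t (\<lambda>p q. - b p q) i j = - T t b i j"
proof -
  have "(\<lambda>k. - (complex_of_real (t ^ k / fact k) * (L ^^ k) b i j)) sums (- T t b i j)"
    by (intro sums_minus T_sums assms)
  then show ?thesis unfolding semigroup_def pow_neg by (simp add: sums_iff)
qed

end


lemma hmat_sym: "hmat N v i k = hmat N v k i"
  unfolding hmat_def by auto

lemma hmat_cnj: "cnj (hmat N v i k) = hmat N v i k"
  unfolding hmat_def by auto

lemma sum3_swap:
  "(\<Sum>i\<in>A. \<Sum>j\<in>B. \<Sum>k\<in>A. g i j k) = (\<Sum>i\<in>A. \<Sum>j\<in>B. \<Sum>k\<in>A. g k j i)"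
proof -
  have "(\<Sum>i\<in>A. \<Sum>j\<in>B. \<Sum>k\<in>A. g i j k) = (\<Sum>j\<in>B. \<Sum>i\<in>A. \<Sum>k\<in>A. g i j k)"
    by (rule sum.swap)
  also have "\<dots> = (\<Sum>j\<in>B. \<Sum>k\<in>A. \<Sum>i\<in>A. g i j k)"
    by (intro sum.cong refl sum.swap)
  also have "\<dots> = (\<Sum>i\<in>A. \<Sum>j\<in>B. \<Sum>k\<in>A. g k j i)"
    by (rule sum.swap[symmetric])
  finally show ?thesis .
qed

lemma S1_real:
  "cnj (\<Sum>i\<in>{1..N}. \<Sum>j\<in>{1..N}. cnj (x i j) * mmul N (hmat N v) x i j)
    = (\<Sum>i\<in>{1..N}. \<Sum>j\<in>{1..N}. cnj (x i j) * mmul N (hmat N v) x i j)"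
proof -
  have "cnj (\<Sum>i\<in>{1..N}. \<Sum>j\<in>{1..N}. cnj (x i j) * mmul N (hmat N v) x i j)
      = (\<Sum>i\<in>{1..N}. \<Sum>j\<in>{1..N}. \<Sum>k\<in>{1..N}. x i j * hmat N v i k * cnj (x k j))"
    unfolding mmul_def by (simp add: sum_distrib_left hmat_cnj mult.assoc)
  also have "\<dots> = (\<Sum>i\<in>{1..N}. \<Sum>j\<in>{1..N}. \<Sum>k\<in>{1..N}. x k j * hmat N v k i * cnj (x i j))"
    by (rule sum3_swap)
  also have "\<dots> = (\<Sum>i\<in>{1..N}. \<Sum>j\<in>{1..N}. cnj (x i j) * mmul N (hmat N v) x i j)"
    unfolding mmul_def by (simp add: sum_distrib_left hmat_sym[of N v _ i for i] mult_ac)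
  finally show ?thesis .
qed

lemma sum3_swap2:
  "(\<Sum>i\<in>A. \<Sum>j\<in>B. \<Sum>k\<in>B. g i j k) = (\<Sum>i\<in>A. \<Sum>j\<in>B. \<Sum>k\<in>B. g i k j)"
  by (intro sum.cong refl sum.swap)

lemma S2_real:
  "cnj (\<Sum>i\<in>{1..N}. \<Sum>j\<in>{1..N}. cnj (x i j) * mmul N x (hmat N v) i j)
    = (\<Sum>i\<in>{1..N}. \<Sum>j\<in>{1..N}. cnj (x i j) * mmul N x (hmat N v) i j)"
proof -
  have "cnj (\<Sum>i\<in>{1..N}. \<Sum>j\<in>{1..N}. cnj (x i j) * mmul N x (hmat N v) i j)
      = (\<Sum>i\<in>{1..N}. \<Sum>j\<in>{1..N}. \<Sum>k\<in>{1..N}. x i j * cnj (x i k) * hmat N v k j)"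
    unfolding mmul_def by (simp add: sum_distrib_left hmat_cnj mult.assoc)
  also have "\<dots> = (\<Sum>i\<in>{1..N}. \<Sum>j\<in>{1..N}. \<Sum>k\<in>{1..N}. x i k * cnj (x i j) * hmat N v j k)"
    by (rule sum3_swap2)
  also have "\<dots> = (\<Sum>i\<in>{1..N}. \<Sum>j\<in>{1..N}. cnj (x i j) * mmul N x (hmat N v) i j)"
    unfolding mmul_def by (simp add: sum_distrib_left hmat_sym[of N v j for j] mult_ac)
  finally show ?thesis .
qed

lemma real_Im0: "cnj z = z \<Longrightarrow> Im z = 0"
  by (metis complex_cnj_cancel_iff complex.sel(2) cnj.sel(2) neg_equal_zero)

lemma wt_Re: "zl \<ge> 0 \<Longrightarrow> zr \<ge> 0 \<Longrightarrow> Re (wt N zl zr i) \<ge> 0"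
  unfolding wt_def by auto

lemma sum_sum_delta:
  assumes "a \<in> A" "b \<in> B" "finite A" "finite B"
  shows "(\<Sum>i\<in>A. \<Sum>j\<in>B. if i = a \<and> j = b then c else 0) = c"
proof -
  have "(\<Sum>j\<in>B. if i = a \<and> j = b then c else 0) = (if i = a then c else 0)" for i
    using assms by (cases "i = a") simp_all
  then show ?thesis using assms by simp
qed

lemma cmod_sq: "cmod z * cmod z = Re z * Re z + Im z * Im z"
  by (metis cmod_power2 power2_eq_square)

lemma Re_cnj_mult_self: "Re (cnj z * (w * z)) = Re w * (cmod z)^2"
  by (simp add: cmod_sq power2_eq_square algebra_simps)

context setting begin

lemma dissip:
  "Re (\<Sum>i\<in>{1..N}. \<Sum>j\<in>{1..N}. cnj (x i j) * L x i j) \<le> - beta * (cmod (x 2 1))^2"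
proof -
  define H1 where "H1 = mmul N (hmat N (\<lambda>_. 0)) x"
  define H2 where "H2 = mmul N x (hmat N (\<lambda>_. 0))"
  have trm: "Re (cnj (x i j) * L x i j) \<le> Re (cnj (x i j) * (- \<i> * (H1 i j - H2 i j)))
     + (if i = 2 \<and> j = 1 then - beta * (cmod (x 2 1))^2 else 0)"
    if i: "i \<in> {1..N}" and j: "j \<in> {1..N}" for i j
  proof -
    have "cnj (x i j) * L x i j = cnj (x i j) * (- \<i> * (H1 i j - H2 i j))
      - cnj (x i j) * ((wt N zl zr i + wt N zl zr j) * x i j)
      + of_real beta * (cnj (x i j) * ((if i = j then x i i else 0) - x i j))"
      unfolding lind_simp[OF N2] H1_def H2_def using i j by (simp add: algebra_simps)
    then have "Re (cnj (x i j) * L x i j) = Re (cnj (x i j) * (- \<i> * (H1 i j - H2 i j)))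
      - (Re (wt N zl zr i) + Re (wt N zl zr j)) * (cmod (x i j))^2
      + beta * (if i = j then 0 else 0 - (cmod (x i j))^2)"
    proof -
      have e1: "Re (cnj (x i j) * ((wt N zl zr i + wt N zl zr j) * x i j))
          = (Re (wt N zl zr i) + Re (wt N zl zr j)) * (cmod (x i j))^2"
        by (simp only: Re_cnj_mult_self plus_complex.sel(1))
      have e2: "Re (of_real beta * (cnj (x i j) * ((if i = j then x i i else 0) - x i j)))
          = beta * (if i = j then 0 else 0 - (cmod (x i j))^2)"
        by (cases "i = j") (simp_all add: cmod_sq power2_eq_square algebra_simps)
      assume eq: "cnj (x i j) * L x i j = cnj (x i j) * (- \<i> * (H1 i j - H2 i j))
        - cnj (x i j) * ((wt N zl zr i + wt N zl zr j) * x i j)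
        + of_real beta * (cnj (x i j) * ((if i = j then x i i else 0) - x i j))"
      show ?thesis unfolding eq plus_complex.sel(1) minus_complex.sel(1) e1 e2 ..
    qed
    moreover have "(Re (wt N zl zr i) + Re (wt N zl zr j)) * (cmod (x i j))^2 \<ge> 0"
      using wt_Re[OF zl0 zr0] by auto
    moreover have "beta * (if i = j then 0 else 0 - (cmod (x i j))^2)
        \<le> (if i = 2 \<and> j = 1 then - beta * (cmod (x 2 1))^2 else 0)"
      using beta0 by (auto simp: mult_nonneg_nonneg)
    ultimately show ?thesis by linarith
  qed
  have "Re (\<Sum>i\<in>{1..N}. \<Sum>j\<in>{1..N}. cnj (x i j) * L x i j)
     = (\<Sum>i\<in>{1..N}. \<Sum>j\<in>{1..N}. Re (cnj (x i j) * L x i j))"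
    by (simp add: Re_sum)
  also have "\<dots> \<le> (\<Sum>i\<in>{1..N}. \<Sum>j\<in>{1..N}. Re (cnj (x i j) * (- \<i> * (H1 i j - H2 i j)))
     + (if i = 2 \<and> j = 1 then - beta * (cmod (x 2 1))^2 else 0))"
    by (intro sum_mono trm) auto
  also have "\<dots> = Re (\<Sum>i\<in>{1..N}. \<Sum>j\<in>{1..N}. cnj (x i j) * (- \<i> * (H1 i j - H2 i j)))
     + (\<Sum>i\<in>{1..N}. \<Sum>j\<in>{1..N}. (if i = 2 \<and> j = 1 then - beta * (cmod (x 2 1))^2 else 0))"
    by (simp add: Re_sum sum.distrib)
  also have "(\<Sum>i\<in>{1..N}. \<Sum>j\<in>{1..N}. (if i = 2 \<and> j = 1 then - beta * (cmod (x 2 1))^2 else 0))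
      = - beta * (cmod (x 2 1))^2"
    by (rule sum_sum_delta) (use N2 in auto)
  also have "(\<Sum>i\<in>{1..N}. \<Sum>j\<in>{1..N}. cnj (x i j) * (- \<i> * (H1 i j - H2 i j)))
     = - \<i> * ((\<Sum>i\<in>{1..N}. \<Sum>j\<in>{1..N}. cnj (x i j) * H1 i j) - (\<Sum>i\<in>{1..N}. \<Sum>j\<in>{1..N}. cnj (x i j) * H2 i j))"
  proof -
    have "(\<Sum>i\<in>{1..N}. \<Sum>j\<in>{1..N}. cnj (x i j) * (- \<i> * (H1 i j - H2 i j)))
      = (\<Sum>i\<in>{1..N}. \<Sum>j\<in>{1..N}. (- \<i>) * (cnj (x i j) * H1 i j - cnj (x i j) * H2 i j))"
      by (intro sum.cong refl) (simp add: algebra_simps)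
    also have "\<dots> = - \<i> * (\<Sum>i\<in>{1..N}. \<Sum>j\<in>{1..N}. (cnj (x i j) * H1 i j - cnj (x i j) * H2 i j))"
      by (simp only: sum_distrib_left)
    also have "\<dots> = - \<i> * ((\<Sum>i\<in>{1..N}. \<Sum>j\<in>{1..N}. cnj (x i j) * H1 i j) - (\<Sum>i\<in>{1..N}. \<Sum>j\<in>{1..N}. cnj (x i j) * H2 i j))"
      by (simp only: sum_subtractf)
    finally show ?thesis .
  qed
  also have "Re \<dots> = 0"
  proof -
    have "Im (\<Sum>i\<in>{1..N}. \<Sum>j\<in>{1..N}. cnj (x i j) * H1 i j) = 0"
      unfolding H1_def by (rule real_Im0[OF S1_real])
    moreover have "Im (\<Sum>i\<in>{1..N}. \<Sum>j\<in>{1..N}. cnj (x i j) * H2 i j) = 0"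
      unfolding H2_def by (rule real_Im0[OF S2_real])
    ultimately show ?thesis by simp
  qed
  finally show ?thesis by simp
qed

end


lemma nsq_deriv:
  assumes "(f has_vector_derivative f') (at t)"
  shows "((\<lambda>t. (cmod (f t))^2) has_real_derivative 2 * Re (cnj (f t) * f')) (at t)"
proof -
  have "((\<lambda>t. cnj (f t) * f t) has_vector_derivative (cnj (f t) * f' + cnj f' * f t)) (at t)"
    by (intro has_vector_derivative_mult has_vector_derivative_cnj assms)
  then have "((\<lambda>t. Re (cnj (f t) * f t)) has_real_derivative Re (cnj (f t) * f' + cnj f' * f t)) (at t)"
    by (rule has_field_derivative_Re)
  moreover have "Re (cnj (f t) * f' + cnj f' * f t) = 2 * Re (cnj (f t) * f')"
    by (simp add: algebra_simps)
  ultimately have d: "((\<lambda>t. Re (cnj (f t) * f t)) has_real_derivative 2 * Re (cnj (f t) * f')) (at t)"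
    by (rule DERIV_cong)
  have "(\<lambda>t. Re (cnj (f t) * f t)) = (\<lambda>t. (cmod (f t))^2)"
    by (rule ext) (simp add: cmod_sq power2_eq_square algebra_simps)
  with d show ?thesis by simp
qed

context setting begin

definition V :: "cmat \<Rightarrow> real \<Rightarrow> real" where
  "V a t = (\<Sum>i\<in>{1..N}. \<Sum>j\<in>{1..N}. (cmod (T t a i j))^2)"

lemma V_deriv:
  "(V a has_real_derivative 2 * Re (\<Sum>i\<in>{1..N}. \<Sum>j\<in>{1..N}. cnj (T t a i j) * L (T t a) i j)) (at t)"
proof -
  have "((\<lambda>t. \<Sum>i\<in>{1..N}. \<Sum>j\<in>{1..N}. (cmod (T t a i j))^2) has_real_derivative
      (\<Sum>i\<in>{1..N}. \<Sum>j\<in>{1..N}. 2 * Re (cnj (T t a i j) * L (T t a) i j))) (at t)"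
  proof (intro DERIV_sum)
    fix i j assume i: "i \<in> {1..N}" and j: "j \<in> {1..N}"
    have "((\<lambda>t. T t a i j) has_vector_derivative L (T t a) i j) (at t)"
      using T_deriv[OF i j, of a t UNIV] T_commute[OF i j, of t a] by simp
    then show "((\<lambda>t. (cmod (T t a i j))^2) has_real_derivative 2 * Re (cnj (T t a i j) * L (T t a) i j)) (at t)"
      by (rule nsq_deriv)
  qed
  moreover have "(\<Sum>i\<in>{1..N}. \<Sum>j\<in>{1..N}. 2 * Re (cnj (T t a i j) * L (T t a) i j))
     = 2 * Re (\<Sum>i\<in>{1..N}. \<Sum>j\<in>{1..N}. cnj (T t a i j) * L (T t a) i j)"
    by (simp add: Re_sum sum_distrib_left)
  ultimately show ?thesis unfolding V_def[abs_def] by simp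
qed

lemma V_deriv_le:
  "2 * Re (\<Sum>i\<in>{1..N}. \<Sum>j\<in>{1..N}. cnj (T t a i j) * L (T t a) i j) \<le> - 2 * beta * (cmod (T t a 2 1))^2"
  using dissip[of "T t a"] by simp

lemma V_mono: assumes "s \<le> t" shows "V a t \<le> V a s"
proof (rule DERIV_nonpos_imp_nonincreasing[OF assms])
  fix x assume "s \<le> x" "x \<le> t"
  have "- 2 * beta * (cmod (T x a 2 1))^2 \<le> 0" using beta0 by simp
  then show "\<exists>y. DERIV (V a) x :> y \<and> y \<le> 0"
    using V_deriv[of a x] V_deriv_le[of x a] by (meson order.trans)
qed

lemma V_nonneg: "V a t \<ge> 0"
  unfolding V_def by (intro sum_nonneg) auto

lemma entry_le_V:
  assumes p: "p \<in> {1..N}" and q: "q \<in> {1..N}"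
  shows "(cmod (T t a p q))^2 \<le> V a t"
proof -
  have "(cmod (T t a p q))^2 \<le> (\<Sum>j\<in>{1..N}. (cmod (T t a p j))^2)"
    by (rule member_le_sum[OF q]) auto
  also have "\<dots> \<le> V a t" unfolding V_def
    by (rule member_le_sum[OF p, where f = "\<lambda>i. \<Sum>j\<in>{1..N}. (cmod (T t a i j))^2"]) (auto intro: sum_nonneg)
  finally show ?thesis .
qed

end

context setting begin

lemma decay:
  assumes bpos: "beta > 0"
  shows "((\<lambda>t. T t a 2 1) \<longlongrightarrow> 0) at_top"
proof -
  have I2: "2 \<in> {1..N}" and I1: "1 \<in> {1..N}" using N2 by auto
  define M where "M = sqrt (V a 0)"
  have M0: "M \<ge> 0" unfolding M_def using V_nonneg by simp
  have entry: "cmod (T t a p q) \<le> M" if "t \<ge> 0" "p \<in> {1..N}" "q \<in> {1..N}" for t p q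
  proof -
    have "(cmod (T t a p q))^2 \<le> V a 0"
      using entry_le_V[OF that(2,3), of t a] V_mono[OF that(1), of a] by linarith
    then show ?thesis unfolding M_def by (rule real_le_rsqrt)
  qed
  define Kc where "Kc = 2 + 2 * (zl + zr) + 2 * beta"
  have Kc0: "Kc \<ge> 0" unfolding Kc_def using zl0 zr0 beta0 by simp
  have Sb: "Sfun N (T t a) \<le> real N * real N * M" if "t \<ge> 0" for t
  proof -
    have "Sfun N (T t a) \<le> (\<Sum>p\<in>{1..N}. \<Sum>q\<in>{1..N}. M)"
      unfolding Sfun_def by (intro sum_mono entry that) auto
    then show ?thesis by simp
  qed
  have Lb: "cmod (L (T t a) 2 1) \<le> Kc * (real N * real N * M)" if "t \<ge> 0" for t
    using lind_bound[OF N2 zl0 zr0 beta0, of "T t a" 2 1] Sb[OF that] Kc0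
    unfolding Kc_def[symmetric] by (meson mult_left_mono order.trans)
  define q where "q t = (cmod (T t a 2 1))^2" for t
  define q' where "q' t = 2 * Re (cnj (T t a 2 1) * L (T t a) 2 1)" for t
  have qd: "(q has_real_derivative q' t) (at t)" for t
  proof -
    have "((\<lambda>t. T t a 2 1) has_vector_derivative L (T t a) 2 1) (at t)"
      using T_deriv[OF I2 I1, of a t UNIV] T_commute[OF I2 I1, of t a] by simp
    then show ?thesis unfolding q_def[abs_def] q'_def by (rule nsq_deriv)
  qed
  define Q where "Q = 2 * M * (Kc * (real N * real N * M)) + 1"
  have Q0: "Q > 0" unfolding Q_def using M0 Kc0 by (intro add_nonneg_pos mult_nonneg_nonneg) auto
  have q'b: "\<bar>q' t\<bar> \<le> Q" if "t \<ge> 0" for t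
  proof -
    have "\<bar>q' t\<bar> \<le> 2 * (cmod (T t a 2 1) * cmod (L (T t a) 2 1))"
      unfolding q'_def using abs_Re_le_cmod[of "cnj (T t a 2 1) * L (T t a) 2 1"]
      by (simp add: norm_mult)
    also have "\<dots> \<le> 2 * (M * (Kc * (real N * real N * M)))"
      using entry[OF that I2 I1] Lb[OF that] M0 by (intro mult_left_mono mult_mono) auto
    finally show ?thesis unfolding Q_def by simp
  qed
  have clA: "q t \<ge> q t0 - Q * (t - t0)" if "0 \<le> t0" "t0 \<le> t" for t0 t
  proof -
    have "q t0 + Q * t0 \<le> q t + Q * t"
    proof (rule DERIV_nonneg_imp_nondecreasing[OF that(2), where f="\<lambda>x. q x + Q * x"])
      fix x assume x: "t0 \<le> x" "x \<le> t"
      have "((\<lambda>x. q x + Q * x) has_real_derivative q' x + Q) (at x)"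
        using qd[of x] by (auto intro!: derivative_eq_intros)
      moreover have "q' x + Q \<ge> 0" using q'b[of x] x that by auto
      ultimately show "\<exists>y. ((\<lambda>x. q x + Q * x) has_real_derivative y) (at x) \<and> y \<ge> 0" by blast
    qed
    then show ?thesis by (simp add: algebra_simps)
  qed
  have clB: "V a (t0 + e / (2 * Q)) \<le> V a t0 - beta * e * (e / (2 * Q))"
    if "0 \<le> t0" "e > 0" "q t0 \<ge> e" for t0 e
  proof -
    define d where "d = e / (2 * Q)"
    have d0: "d > 0" unfolding d_def using that Q0 by simp
    have "V a (t0 + d) + beta * e * (t0 + d) \<le> V a t0 + beta * e * t0"
    proof (rule DERIV_nonpos_imp_nonincreasing[where f="\<lambda>x. V a x + beta * e * x"])
      show "t0 \<le> t0 + d" using d0 by simp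
      fix x assume x: "t0 \<le> x" "x \<le> t0 + d"
      define D where "D = 2 * Re (\<Sum>i\<in>{1..N}. \<Sum>j\<in>{1..N}. cnj (T x a i j) * L (T x a) i j)"
      have "((\<lambda>x. V a x + beta * e * x) has_real_derivative D + beta * e) (at x)"
        unfolding D_def using V_deriv[of a x] by (auto intro!: derivative_eq_intros)
      moreover have "D + beta * e \<le> 0"
      proof -
        have "q x \<ge> q t0 - Q * (x - t0)" by (rule clA) (use that x in auto)
        moreover have "Q * (x - t0) \<le> Q * d" using x Q0 by (intro mult_left_mono) auto
        moreover have "Q * d = e / 2" unfolding d_def using Q0 by simp
        ultimately have "q x \<ge> e / 2" using that by linarith
        then have "beta * (e / 2) \<le> beta * q x" using bpos by (intro mult_left_mono) auto
        then have "2 * beta * q x \<ge> beta * e" by (simp add: algebra_simps)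
        moreover have "D \<le> - 2 * beta * q x" unfolding D_def q_def by (rule V_deriv_le)
        ultimately show ?thesis by linarith
      qed
      ultimately show "\<exists>y. ((\<lambda>x. V a x + beta * e * x) has_real_derivative y) (at x) \<and> y \<le> 0" by blast
    qed
    then show ?thesis unfolding d_def[symmetric] by (simp add: algebra_simps)
  qed
  have clC: "eventually (\<lambda>t. q t < e) at_top" if e: "e > 0" for e
  proof (rule ccontr)
    assume "\<not> eventually (\<lambda>t. q t < e) at_top"
    then have nx: "\<not> (\<exists>T0. \<forall>t\<ge>T0. q t < e)" unfolding eventually_at_top_linorder .
    have fr: "\<exists>t\<ge>T0. q t \<ge> e" for T0
      using nx not_less by blast
    define c where "c = beta * e * (e / (2 * Q))"
    have c0: "c > 0" unfolding c_def using bpos e Q0 by simp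
    have ex: "\<exists>T0\<ge>0. V a T0 \<le> V a 0 - real m * c" for m
    proof (induction m)
      case 0
      then show ?case by (intro exI[of _ 0]) simp
    next
      case (Suc m)
      then obtain T0 where T0: "T0 \<ge> 0" "V a T0 \<le> V a 0 - real m * c" by blast
      obtain t where t: "t \<ge> T0" "q t \<ge> e" using fr by blast
      have t0: "0 \<le> t" using t T0 by linarith
      have "V a (t + e / (2 * Q)) \<le> V a t - c" unfolding c_def by (rule clB[OF t0 e t(2)])
      moreover have "V a t \<le> V a T0" by (rule V_mono[OF t(1)])
      moreover have "e / (2 * Q) > 0" using e Q0 by simp
      then have "t + e / (2 * Q) \<ge> 0" using t0 by linarith
      moreover have "real (Suc m) * c = real m * c + c" by (simp add: algebra_simps)
      ultimately have "V a (t + e / (2 * Q)) \<le> V a 0 - real (Suc m) * c" using T0 by linarith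
      with \<open>t + e / (2 * Q) \<ge> 0\<close> show ?case by blast
    qed
    obtain m :: nat where "V a 0 / c < real m" using reals_Archimedean2[of "V a 0 / c"] by blast
    then have m: "V a 0 < real m * c" using c0 by (simp add: pos_divide_less_eq)
    obtain T0 where "V a T0 \<le> V a 0 - real m * c" using ex[of m] by blast
    then show False using V_nonneg[of a T0] m by linarith
  qed
  show ?thesis
  proof (rule tendstoI)
    fix e :: real assume e: "e > 0"
    have "eventually (\<lambda>t. q t < e^2) at_top" using e by (intro clC) simp
    then show "eventually (\<lambda>t. dist (T t a 2 1) 0 < e) at_top"
    proof (rule eventually_mono)
      fix t assume "q t < e^2"
      then have "cmod (T t a 2 1) < e" unfolding q_def by (rule power2_less_imp_less[OF _ less_imp_le[OF e]])
      then show "dist (T t a 2 1) 0 < e" by simp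
    qed
  qed
qed

end

lemma has_integral_improper:
  fixes g :: "real \<Rightarrow> complex"
  assumes int: "\<And>S. S \<ge> 0 \<Longrightarrow> (g has_integral F S) {0..S}"
    and lim: "(F \<longlongrightarrow> I) at_top"
  shows "(g has_integral I) {0..}"
  unfolding has_integral_alt'
proof (intro conjI allI impI)
  fix a b :: real
  have r: "(\<lambda>x. if x \<in> {0..} then g x else 0) = (\<lambda>x. if x \<in> {0..} then g x else 0)" ..
  show "(\<lambda>x. if x \<in> {0..} then g x else 0) integrable_on cbox a b"
  proof (cases "b \<ge> 0")
    case True
    have "((\<lambda>x. if x \<in> {0..b} then g x else 0) has_integral F b) {min a 0..b}"
      using int[OF True] by (subst has_integral_restrict) auto
    then have Ii: "(\<lambda>x. if x \<in> {0..b} then g x else 0) integrable_on {a..b}"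
      by (rule integrable_on_subinterval[OF has_integral_integrable]) auto
    have Ee: "(\<lambda>x. if x \<in> {0..} then g x else 0) x = (\<lambda>x. if x \<in> {0..b} then g x else 0) x"
      if "x \<in> {a..b} - {}" for x using that by auto
    show ?thesis unfolding cbox_interval by (rule integrable_spike_finite[OF finite.emptyI Ee Ii])
  next
    case False
    have "(\<lambda>x. if x \<in> {0..} then g x else 0) x = 0" if "x \<in> {a..b}" for x using that False by auto
    then have "((\<lambda>x. if x \<in> {0..} then g x else 0) has_integral 0) {a..b}"
      by (intro has_integral_is_0) auto
    then show ?thesis by auto
  qed
next
  fix e :: real assume e: "e > 0"
  obtain B0 where B0: "\<And>S. S \<ge> B0 \<Longrightarrow> dist (F S) I < e"
    using lim e unfolding tendsto_iff eventually_at_top_linorder by blast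
  show "\<exists>B>0. \<forall>a b. ball 0 B \<subseteq> cbox a b \<longrightarrow>
        norm (integral (cbox a b) (\<lambda>x. if x \<in> {0..} then g x else 0) - I) < e"
  proof (intro exI[of _ "max B0 1"] conjI allI impI)
    show "max B0 1 > 0" by simp
    fix a b :: real assume sub: "ball 0 (max B0 1) \<subseteq> cbox a b"
    have bB: "b \<ge> max B0 1"
    proof (rule ccontr)
      assume "\<not> b \<ge> max B0 1"
      then have "(max b 0 + max B0 1) / 2 \<in> ball 0 (max B0 1)" by (auto simp: dist_real_def)
      moreover have "(max b 0 + max B0 1) / 2 \<notin> cbox a b" using \<open>\<not> b \<ge> max B0 1\<close> by auto
      ultimately show False using sub by blast
    qed
    have aB: "a \<le> 0"
    proof (rule ccontr)
      assume "\<not> a \<le> 0"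
      then have "0 \<in> ball 0 (max B0 1)" "0 \<notin> cbox a b" by auto
      then show False using sub by blast
    qed
    have b0: "b \<ge> 0" using bB by linarith
    have "((\<lambda>x. if x \<in> {0..b} then g x else 0) has_integral F b) {a..b}"
      using int[OF b0] aB by (subst has_integral_restrict) auto
    moreover have Ee: "(\<lambda>x. if x \<in> {0..} then g x else 0) x = (\<lambda>x. if x \<in> {0..b} then g x else 0) x"
      if "x \<in> {a..b} - {}" for x using that by auto
    ultimately have "((\<lambda>x. if x \<in> {0..} then g x else 0) has_integral F b) {a..b}"
      by (intro has_integral_spike_finite[OF finite.emptyI Ee])
    then have "integral (cbox a b) (\<lambda>x. if x \<in> {0..} then g x else 0) = F b"
      by (simp add: integral_unique)
    then show "norm (integral (cbox a b) (\<lambda>x. if x \<in> {0..} then g x else 0) - I) < e"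
      using B0[of b] bB by (simp add: dist_norm)
  qed
qed


lemma mmul_h_left_eq:
  assumes i: "i \<in> {1..N}"
  shows "mmul N (hmat N (\<lambda>_. 0)) a i j = - ((if i + 1 \<le> N then a (i+1) j else 0) + (if 2 \<le> i then a (i-1) j else 0))"
proof -
  have "mmul N (hmat N (\<lambda>_. 0)) a i j = (\<Sum>k\<in>{1..N}. - ((if k = i + 1 then a k j else 0) + (if k = i - 1 \<and> 2 \<le> i then a k j else 0)))"
    unfolding mmul_def hmat_def using i by (intro sum.cong refl) auto
  also have "\<dots> = - ((\<Sum>k\<in>{1..N}. (if k = i + 1 then a k j else 0)) + (\<Sum>k\<in>{1..N}. (if k = i - 1 \<and> 2 \<le> i then a k j else 0)))"
    by (simp only: sum_negf sum.distrib)
  also have "\<dots> = - ((if i + 1 \<le> N then a (i+1) j else 0) + (if 2 \<le> i then a (i-1) j else 0))"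
    using i by (auto simp: sum.delta')
  finally show ?thesis .
qed

lemma mmul_h_right_eq:
  assumes j: "j \<in> {1..N}"
  shows "mmul N a (hmat N (\<lambda>_. 0)) i j = - ((if j + 1 \<le> N then a i (j+1) else 0) + (if 2 \<le> j then a i (j-1) else 0))"
proof -
  have "mmul N a (hmat N (\<lambda>_. 0)) i j = (\<Sum>k\<in>{1..N}. - ((if k = j + 1 then a i k else 0) + (if k = j - 1 \<and> 2 \<le> j then a i k else 0)))"
    unfolding mmul_def hmat_def using j by (intro sum.cong refl) auto
  also have "\<dots> = - ((\<Sum>k\<in>{1..N}. (if k = j + 1 then a i k else 0)) + (\<Sum>k\<in>{1..N}. (if k = j - 1 \<and> 2 \<le> j then a i k else 0)))"
    by (simp only: sum_negf sum.distrib)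
  also have "\<dots> = - ((if j + 1 \<le> N then a i (j+1) else 0) + (if 2 \<le> j then a i (j-1) else 0))"
    using j by (auto simp: sum.delta')
  finally show ?thesis .
qed


definition dd :: "nat \<Rightarrow> real \<Rightarrow> real \<Rightarrow> real \<Rightarrow> real \<Rightarrow> real \<Rightarrow> nat \<Rightarrow> real" where
  "dd N zl zr beta ainl c p = (ainl + c) / zl + c * (beta * (real p - 1) + (if p \<ge> 2 then zl else 0) + (if p = N then zr else 0))"

definition Rst :: "nat \<Rightarrow> real \<Rightarrow> real \<Rightarrow> real \<Rightarrow> real \<Rightarrow> real \<Rightarrow> cmat" where
  "Rst N zl zr beta ainl c = (\<lambda>p q. if p \<in> {1..N} \<and> q \<in> {1..N} then
     (if p = q then complex_of_real (dd N zl zr beta ainl c p) else if q = p + 1 then \<i> * complex_of_real c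
      else if p = q + 1 then - \<i> * complex_of_real c else 0) else 0)"

lemma stat_diag:
  assumes N: "N \<ge> 2" and i: "i \<in> {1..N}"
  shows "lind N (\<lambda>_. 0) zl zr beta (Rst N zl zr beta ainl c) i i
    = 2 * complex_of_real c * ((if i + 1 \<le> N then 1 else 0) - (if 2 \<le> i then 1 else 0))
      - 2 * wt N zl zr i * complex_of_real (dd N zl zr beta ainl c i)"
  using i
  unfolding lind_simp[OF N] mmul_h_left_eq[OF i] mmul_h_right_eq[OF i]
  by (auto simp: Rst_def algebra_simps)

lemma stat_up:
  assumes N: "N \<ge> 2" and i: "i \<in> {1..N}" and i1: "i + 1 \<le> N"
  shows "lind N (\<lambda>_. 0) zl zr beta (Rst N zl zr beta ainl c) i (i+1)
    = - \<i> * (complex_of_real (dd N zl zr beta ainl c i) - complex_of_real (dd N zl zr beta ainl c (i+1)))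
      - (wt N zl zr i + wt N zl zr (i+1)) * (\<i> * complex_of_real c) - complex_of_real beta * (\<i> * complex_of_real c)"
proof -
  have j: "i + 1 \<in> {1..N}" using i i1 by auto
  show ?thesis using i i1
    unfolding lind_simp[OF N] mmul_h_left_eq[OF i] mmul_h_right_eq[OF j]
    by (auto simp: Rst_def algebra_simps)
qed

lemma stat_down:
  assumes N: "N \<ge> 2" and j: "j \<in> {1..N}" and j1: "j + 1 \<le> N"
  shows "lind N (\<lambda>_. 0) zl zr beta (Rst N zl zr beta ainl c) (j+1) j
    = - \<i> * (complex_of_real (dd N zl zr beta ainl c (j+1)) - complex_of_real (dd N zl zr beta ainl c j))
      + (wt N zl zr (j+1) + wt N zl zr j) * (\<i> * complex_of_real c) + complex_of_real beta * (\<i> * complex_of_real c)"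
proof -
  have i: "j + 1 \<in> {1..N}" using j j1 by auto
  show ?thesis using j j1
    unfolding lind_simp[OF N] mmul_h_left_eq[OF i] mmul_h_right_eq[OF j]
    by (auto simp: Rst_def algebra_simps)
qed

lemma stat_far2:
  assumes N: "N \<ge> 2" and i: "i \<in> {1..N}" and j: "i + 2 \<le> N"
  shows "lind N (\<lambda>_. 0) zl zr beta (Rst N zl zr beta ainl c) i (i+2) = 0"
proof -
  have j': "i + 2 \<in> {1..N}" using j by auto
  show ?thesis using i j
    unfolding lind_simp[OF N] mmul_h_left_eq[OF i] mmul_h_right_eq[OF j']
    by (simp add: Rst_def) arith
qed

lemma stat_far2':
  assumes N: "N \<ge> 2" and j: "j \<in> {1..N}" and i: "j + 2 \<le> N"
  shows "lind N (\<lambda>_. 0) zl zr beta (Rst N zl zr beta ainl c) (j+2) j = 0"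
proof -
  have i': "j + 2 \<in> {1..N}" using i by auto
  show ?thesis using i j
    unfolding lind_simp[OF N] mmul_h_left_eq[OF i'] mmul_h_right_eq[OF j]
    by (simp add: Rst_def) arith
qed

lemma stat_far3:
  assumes N: "N \<ge> 2" and i: "i \<in> {1..N}" and j: "j \<in> {1..N}" and far: "i + 3 \<le> j \<or> j + 3 \<le> i"
  shows "lind N (\<lambda>_. 0) zl zr beta (Rst N zl zr beta ainl c) i j = 0"
proof -
  have z: "Rst N zl zr beta ainl c p q = 0" if "p + 2 \<le> q \<or> q + 2 \<le> p" for p q
    using that unfolding Rst_def by auto
  have z1: "Rst N zl zr beta ainl c (i+1) j = 0" by (rule z) (use far in arith)
  have z2: "Rst N zl zr beta ainl c (i-1) j = 0" by (rule z) (use far in arith)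
  have z3: "Rst N zl zr beta ainl c i (j+1) = 0" by (rule z) (use far in arith)
  have z4: "Rst N zl zr beta ainl c i (j-1) = 0" by (rule z) (use far in arith)
  have z5: "Rst N zl zr beta ainl c i j = 0" by (rule z) (use far in arith)
  have ne: "i \<noteq> j" using far by arith
  show ?thesis using i j ne
    unfolding lind_simp[OF N] mmul_h_left_eq[OF i] mmul_h_right_eq[OF j] z1 z2 z3 z4 z5
    by simp
qed

lemma dd_diff:
  assumes "1 \<le> i" "i + 1 \<le> N"
  shows "dd N zl zr beta ainl c (i+1) = dd N zl zr beta ainl c i
     + c * (beta + ((if i = 1 then zl else 0) + (if i + 1 = N then zr else 0)))"
  using assms unfolding dd_def by (auto simp: algebra_simps)

lemma wt_sum:
  assumes "1 \<le> i" "i + 1 \<le> N"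
  shows "wt N zl zr i + wt N zl zr (i+1) = complex_of_real ((if i = 1 then zl else 0) + (if i + 1 = N then zr else 0))"
  using assms unfolding wt_def by auto

lemma offdiag_alg1:
  "- \<i> * (complex_of_real d - complex_of_real (d + c * (beta + W))) - complex_of_real W * (\<i> * complex_of_real c)
    - complex_of_real beta * (\<i> * complex_of_real c) = 0"
  by (simp add: algebra_simps)

lemma offdiag_alg2:
  "- \<i> * (complex_of_real (d + c * (beta + W)) - complex_of_real d) + complex_of_real W * (\<i> * complex_of_real c)
    + complex_of_real beta * (\<i> * complex_of_real c) = 0"
  by (simp add: algebra_simps)

lemma stationary:
  assumes N: "N \<ge> 2" and zl: "zl > 0"
    and hyp: "zr * dd N zl zr beta ainl c N = ainr - c"
  shows "lind N (\<lambda>_. 0) zl zr beta (Rst N zl zr beta ainl c) i j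
      = - (complex_of_real (2 * ainl) * proj 1 i j + complex_of_real (2 * ainr) * proj N i j)"
proof (cases "i \<in> {1..N} \<and> j \<in> {1..N}")
  case False
  then show ?thesis unfolding lind_simp[OF N] if_not_P[OF False] proj_def using N by auto
next
  case True
  then have i: "i \<in> {1..N}" and j: "j \<in> {1..N}" by auto
  consider "i = j" | "j = i + 1" | "i = j + 1" | "j = i + 2" | "i = j + 2" | "i + 3 \<le> j \<or> j + 3 \<le> i"
    by arith
  then show ?thesis
  proof cases
    case 1
    then have jj: "j = i" by simp
    consider "i = 1" | "i = N" | "2 \<le> i" "i + 1 \<le> N" using i by fastforce
    then show ?thesis
    proof cases
      case 1
      have "zl * dd N zl zr beta ainl c 1 = ainl + c" unfolding dd_def using zl N by (simp add: field_simps)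
      then have D: "complex_of_real (dd N zl zr beta ainl c i) = (of_real ainl + of_real c) / of_real zl" using zl 1
        by (simp add: field_simps flip: of_real_mult)
      show ?thesis unfolding jj stat_diag[OF N i] D using 1 N zl
        by (simp add: wt_def proj_def field_simps)
    next
      case 2
      have A: "complex_of_real (2 * ainr) = 2 * of_real c + 2 * (of_real zr * of_real (dd N zl zr beta ainl c N))"
      proof -
        have "ainr = c + zr * dd N zl zr beta ainl c N" using hyp by simp
        then show ?thesis by simp
      qed
      have w: "wt N zl zr N = of_real zr" using N by (simp add: wt_def)
      have p: "proj 1 N N = 0" "proj N N N = 1" using N by (auto simp: proj_def)
      have c1: "(if N + 1 \<le> N then 1 else 0) = (0::complex)" "(if 2 \<le> N then 1 else 0) = (1::complex)" using N by auto
      have iN: "N \<in> {1..N}" using N by auto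
      show ?thesis unfolding jj 2 stat_diag[OF N iN] w p c1 A
        by (simp add: algebra_simps)
    next
      case 3
      then show ?thesis unfolding jj stat_diag[OF N i] by (simp add: wt_def proj_def)
    qed
  next
    case 2
    have i1: "1 \<le> i" "i + 1 \<le> N" using i j 2 by auto
    have p: "proj 1 i (i+1) = 0" "proj N i (i+1) = 0" by (auto simp: proj_def)
    show ?thesis unfolding 2 stat_up[OF N i i1(2)] dd_diff[OF i1] wt_sum[OF i1] offdiag_alg1 p
      by simp
  next
    case 3
    have i1: "1 \<le> j" "j + 1 \<le> N" using i j 3 by auto
    have e: "wt N zl zr (j+1) + wt N zl zr j = wt N zl zr j + wt N zl zr (j+1)" by simp
    have p: "proj 1 (j+1) j = 0" "proj N (j+1) j = 0" by (auto simp: proj_def)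
    show ?thesis unfolding 3 stat_down[OF N j i1(2)] dd_diff[OF i1] e wt_sum[OF i1] offdiag_alg2 p
      by simp
  next
    case 4
    then show ?thesis using stat_far2[OF N i] j by (simp add: proj_def)
  next
    case 5
    then show ?thesis using stat_far2'[OF N j] i by (simp add: proj_def)
  next
    case 6
    then show ?thesis using stat_far3[OF N i j 6] by (auto simp: proj_def)
  qed
qed


theorem theorem3p12:
  fixes N :: nat and v :: "nat \<Rightarrow> real"
    and ainl aoutl ainr aoutr beta :: real
  assumes "N \<ge> 2"
    and "ainl \<ge> 0" "aoutl \<ge> 0" "ainr \<ge> 0" "aoutr \<ge> 0"
    and "\<forall>n. v n = 0"
    and "beta > 0" and "ainl + aoutl > 0" and "ainr + aoutr > 0"
  shows "current N v ainl aoutl ainr aoutr beta =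
    2 * (ainl * aoutr - aoutl * ainr) /
      ((ainl + aoutl) + (ainr + aoutr)
       + (ainl + aoutl) * (ainr + aoutr) * ((ainl + aoutl) + (ainr + aoutr) + beta * (real N - 1)))"
proof -
  note N = assms(1)
  have v: "v = (\<lambda>_. 0)" using assms(6) by auto
  define zl where "zl = ainl + aoutl"
  define zr where "zr = ainr + aoutr"
  have zl: "zl > 0" and zr: "zr > 0" using assms(8,9) unfolding zl_def zr_def by auto
  have b: "beta > 0" by fact
  interpret setting N zl zr beta
    by unfold_locales (use N zl zr b in auto)
  define Dd where "Dd = zl + zr + zl * zr * (zl + zr + beta * (real N - 1))"
  have NR: "real N - 1 \<ge> 0" using N by simp
  have Dd: "Dd > 0" unfolding Dd_def using zl zr b NR by (intro add_pos_nonneg mult_nonneg_nonneg) auto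
  define c where "c = (zl * ainr - zr * ainl) / Dd"
  have hyp: "zr * dd N zl zr beta ainl c N = ainr - c"
  proof -
    define X where "X = beta * (real N - 1) + zl + zr"
    have cD: "c * Dd = zl * ainr - zr * ainl" unfolding c_def using Dd by simp
    have cD2: "c * zl + c * zr + zl * zr * c * X = zl * ainr - zr * ainl"
      using cD unfolding Dd_def X_def by (simp add: algebra_simps)
    have dN: "dd N zl zr beta ainl c N = (ainl + c) / zl + c * X"
      unfolding dd_def X_def using N by simp
    have "zl * (zr * dd N zl zr beta ainl c N) = zr * (ainl + c) + zl * zr * c * X"
      unfolding dN using zl by (simp add: field_simps)
    also have "\<dots> = zl * (ainr - c)"
      using cD2 by (simp add: algebra_simps)
    finally show ?thesis using zl by simp
  qed
  define R where "R = Rst N zl zr beta ainl c"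
  define bb where "bb = (\<lambda>r c'. complex_of_real (2 * ainl) * proj 1 r c' + complex_of_real (2 * ainr) * proj N r c')"
  have LR: "L R = (\<lambda>p q. - bb p q)"
    unfolding R_def bb_def by (intro ext) (rule stationary[OF N zl hyp])
  have I2: "2 \<in> {1..N}" and I1: "1 \<in> {1..N}" using N by auto
  have der: "((\<lambda>s. - T s R 2 1) has_vector_derivative T s bb 2 1) (at s within X)" for s X
  proof -
    have "((\<lambda>s. T s R 2 1) has_vector_derivative T s (L R) 2 1) (at s within X)"
      by (rule T_deriv[OF I2 I1])
    then have "((\<lambda>s. T s R 2 1) has_vector_derivative - T s bb 2 1) (at s within X)"
      unfolding LR T_neg[OF I2 I1] .
    then show ?thesis using has_vector_derivative_minus by fastforce
  qed
  have int: "((\<lambda>s. T s bb 2 1) has_integral (R 2 1 - T S R 2 1)) {0..S}" if "S \<ge> 0" for S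
  proof -
    have "((\<lambda>s. T s bb 2 1) has_integral ((- T S R 2 1) - (- T 0 R 2 1))) {0..S}"
      by (rule fundamental_theorem_of_calculus[OF that der])
    then show ?thesis unfolding T_zero by simp
  qed
  have lim: "((\<lambda>S. R 2 1 - T S R 2 1) \<longlongrightarrow> R 2 1 - 0) at_top"
    by (intro tendsto_diff tendsto_const decay[OF b])
  have "((\<lambda>s. T s bb 2 1) has_integral R 2 1) {0..}"
    using has_integral_improper[OF int lim] by simp
  then have Rinf: "Rinf N v ainl aoutl ainr aoutr beta 2 1 = R 2 1"
    unfolding Rinf_def v zl_def[symmetric] zr_def[symmetric] bb_def[symmetric]
    by (rule integral_unique)
  have R21: "R 2 1 = - \<i> * complex_of_real c" unfolding R_def Rst_def using N by auto
  have "current N v ainl aoutl ainr aoutr beta = - 2 * c"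
    unfolding current_def Rinf R21 by simp
  also have "\<dots> = 2 * (ainl * aoutr - aoutl * ainr) / Dd"
    unfolding c_def zl_def zr_def using Dd by (simp add: field_simps)
  finally show ?thesis unfolding Dd_def zl_def zr_def .
qed


end
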